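(* Let $G$ be a finite pseudo reflection group. Then $B_G(\Upsilon)$ is spanned as a vector space by the set of products $T_we_{i_1}e_{i_2}\cdots e_{i_M}$ with $w\in G$, $M\ge0$, the indices $i_1,\dots,i_M\in P$ pairwise distinct, and $e_{i_u}e_{i_v}=e_{i_v}e_{i_u}$ for all $u,v$.
   Context: Let $V$ be a finite-dimensional complex vector space and $G\subset U(V)$ a finite pseudo reflection group. Let $R$ be the set of pseudo reflections in $G$ and $\{H_i\}_{i\in P}$ the set of their reflecting hyperplanes. $w(i)$ is defined by $H_{w(i)}=w(H_i)$, and $i\sim j$ means $j=w(i)$ for some $w$. $R(i,j)=\{s\in R: s(H_j)=H_i\}$. $G_i$ is the pointwise stabilizer of $H_i$, and $s_i\in G_i$ its element with exceptional eigenvalue $e^{2\pi\sqrt{-1}/|G_i|}$. For $i\ne j$, $H_i\pitchfork H_j$ means $\{k: H_i\cap H_j\subset H_k\}=\{i,j\}$; a codimension-2 edge is crossing if it equals $H_i\cap H_j$ with $H_i\pitchfork H_j$, noncrossing otherwise. $V_w$ is the fixed space of $w$. Admissible parameters $\Upsilon=\{\mu_s,\tau_i\}$: $\mu_s\ne0$ constant on conjugacy classes of $R$, $\tau_i$ constant on $G$-orbits of $P$. $B_G(\Upsilon)$ is the unital $\mathbb C$-algebra generated by $\{T_w\}_{w\in G}\cup\{e_i\}_{i\in P}$, $T_1=1$, with relations: (0) $T_{w_1}T_{w_2}=T_{w_1w_2}$; (1) $T_{s_i}e_i=e_iT_{s_i}=e_i$; (1') $T_we_i=e_iT_w=e_i$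 if $w(H_i)=H_i$ and $H_i\cap V_w$ is a noncrossing codimension-2 edge; (2) $e_i^2=\tau_ie_i$; (3) $T_we_j=e_iT_w$ if $w(H_j)=H_i$; (4) $e_ie_j=e_je_i$ if $H_i\pitchfork H_j$; (5) $e_ie_j=(\sum_{s\in R(i,j)}\mu_sT_s)e_j=e_i(\sum_{s\in R(i,j)}\mu_sT_s)$ if $i\ne j$, $H_i\cap H_j$ noncrossing and $R(i,j)\ne\emptyset$; (6) $e_ie_j=0$ if $i\ne j$, $H_i\cap H_j$ noncrossing and $R(i,j)=\emptyset$. *)

theory Defs
  imports "HOL-Analysis.Analysis"
begin

text \<open>V is modelled as complex^'n (any finite index type 'n), linear maps of V as
  matrices complex^'n^'n acting by (*v).  Dimensions are taken over the field of
  complex numbers (vec.dim, from Cartesian_Space).  The reflecting hyperplanes are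
  used themselves as their own indices, so the index set P is a set of subspaces.\<close>

type_synonym 'n cvec = "complex ^ 'n"
type_synonym 'n cmat = "complex ^ 'n ^ 'n"

definition adjoint_mat :: "'n::finite cmat \<Rightarrow> 'n cmat" where
  "adjoint_mat A = (\<chi> i j. cnj (A $ j $ i))"

definition unitary_mat :: "'n::finite cmat \<Rightarrow> bool" where
  "unitary_mat A \<longleftrightarrow> A ** adjoint_mat A = mat 1 \<and> adjoint_mat A ** A = mat 1"

definition fixspace :: "'n::finite cmat \<Rightarrow> 'n cvec set" where
  "fixspace w = {v. w *v v = v}"

definition act :: "'n::finite cmat \<Rightarrow> 'n cvec set \<Rightarrow> 'n cvec set" where
  "act w H = (\<lambda>v. w *v v) ` H"

definition is_hyperplane :: "'n::finite cvec set \<Rightarrow> bool" where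
  "is_hyperplane H \<longleftrightarrow> vec.subspace H \<and> vec.dim H = CARD('n) - 1"

definition pseudo_reflection :: "'n::finite cmat \<Rightarrow> bool" where
  "pseudo_reflection s \<longleftrightarrow> invertible s \<and> s \<noteq> mat 1 \<and> is_hyperplane (fixspace s)"

definition finite_mat_group :: "'n::finite cmat set \<Rightarrow> bool" where
  "finite_mat_group G \<longleftrightarrow> finite G \<and> mat 1 \<in> G \<and> (\<forall>a\<in>G. \<forall>b\<in>G. a ** b \<in> G)
     \<and> (\<forall>a\<in>G. invertible a \<and> matrix_inv a \<in> G)"

inductive_set subgroup_gen :: "'n::finite cmat set \<Rightarrow> 'n cmat set" for S where
  one: "mat 1 \<in> subgroup_gen S"
| gen: "s \<in> S \<Longrightarrow> s \<in> subgroup_gen S"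
| mult: "a \<in> subgroup_gen S \<Longrightarrow> b \<in> subgroup_gen S \<Longrightarrow> a ** b \<in> subgroup_gen S"
| inv: "a \<in> subgroup_gen S \<Longrightarrow> matrix_inv a \<in> subgroup_gen S"

definition refl_set :: "'n::finite cmat set \<Rightarrow> 'n cmat set" where
  "refl_set G = {s \<in> G. pseudo_reflection s}"

definition hyps :: "'n::finite cmat set \<Rightarrow> 'n cvec set set" where
  "hyps G = fixspace ` refl_set G"

definition unitary_pseudo_reflection_group :: "'n::finite cmat set \<Rightarrow> bool" where
  "unitary_pseudo_reflection_group G \<longleftrightarrow>
     finite_mat_group G \<and> (\<forall>w\<in>G. unitary_mat w) \<and> G = subgroup_gen (refl_set G)"

definition pt_stab :: "'n::finite cmat set \<Rightarrow> 'n cvec set \<Rightarrow> 'n cmat set" where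
  "pt_stab G H = {w \<in> G. \<forall>v\<in>H. w *v v = v}"

definition dist_refl :: "'n::finite cmat set \<Rightarrow> 'n cvec set \<Rightarrow> 'n cmat" where
  "dist_refl G H = (THE s. s \<in> pt_stab G H \<and>
     (\<exists>v. v \<notin> H \<and> s *v v = exp (2 * pi * \<i> / of_nat (card (pt_stab G H))) *s v))"

definition transversal :: "'n::finite cmat set \<Rightarrow> 'n cvec set \<Rightarrow> 'n cvec set \<Rightarrow> bool" where
  "transversal G H K \<longleftrightarrow> H \<noteq> K \<and> {L \<in> hyps G. H \<inter> K \<subseteq> L} = {H, K}"

definition codim2_edge :: "'n::finite cmat set \<Rightarrow> 'n cvec set \<Rightarrow> bool" where
  "codim2_edge G X \<longleftrightarrow> (\<exists>H\<in>hyps G. \<exists>K\<in>hyps G. H \<noteq> K \<and> X = H \<inter> K)"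

definition crossing_edge :: "'n::finite cmat set \<Rightarrow> 'n cvec set \<Rightarrow> bool" where
  "crossing_edge G X \<longleftrightarrow> (\<exists>H\<in>hyps G. \<exists>K\<in>hyps G. transversal G H K \<and> X = H \<inter> K)"

definition noncrossing_edge :: "'n::finite cmat set \<Rightarrow> 'n cvec set \<Rightarrow> bool" where
  "noncrossing_edge G X \<longleftrightarrow> codim2_edge G X \<and> \<not> crossing_edge G X"

definition Rset :: "'n::finite cmat set \<Rightarrow> 'n cvec set \<Rightarrow> 'n cvec set \<Rightarrow> 'n cmat set" where
  "Rset G H K = {s \<in> refl_set G. act s K = H}"

definition admissible :: "'n::finite cmat set \<Rightarrow> ('n cmat \<Rightarrow> complex) \<Rightarrow> ('n cvec set \<Rightarrow> complex) \<Rightarrow> bool" where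
  "admissible G \<mu> \<tau> \<longleftrightarrow>
     (\<forall>s\<in>refl_set G. \<mu> s \<noteq> 0)
   \<and> (\<forall>s\<in>refl_set G. \<forall>w\<in>G. \<mu> (w ** s ** matrix_inv w) = \<mu> s)
   \<and> (\<forall>H\<in>hyps G. \<forall>w\<in>G. \<tau> (act w H) = \<tau> H)"

text \<open>A unital complex algebra structure on a ring 'b: a unital ring homomorphism
  from the complex numbers into the centre of 'b (the scalars).\<close>
definition complex_algebra_str :: "(complex \<Rightarrow> 'b::ring_1) \<Rightarrow> bool" where
  "complex_algebra_str \<iota> \<longleftrightarrow> \<iota> 1 = 1 \<and> (\<forall>a b. \<iota> (a + b) = \<iota> a + \<iota> b)
     \<and> (\<forall>a b. \<iota> (a * b) = \<iota> a * \<iota> b) \<and> (\<forall>a x. \<iota> a * x = x * \<iota> a)"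

definition lin_span :: "(complex \<Rightarrow> 'b::ring_1) \<Rightarrow> 'b set \<Rightarrow> 'b set" where
  "lin_span \<iota> X = {(\<Sum>x\<in>F. \<iota> (c x) * x) | c F. finite F \<and> F \<subseteq> X}"

inductive_set gen_subalg :: "(complex \<Rightarrow> 'b::ring_1) \<Rightarrow> 'b set \<Rightarrow> 'b set" for \<iota> X where
  scal: "\<iota> c \<in> gen_subalg \<iota> X"
| gen: "x \<in> X \<Longrightarrow> x \<in> gen_subalg \<iota> X"
| add: "x \<in> gen_subalg \<iota> X \<Longrightarrow> y \<in> gen_subalg \<iota> X \<Longrightarrow> x + y \<in> gen_subalg \<iota> X"
| mult: "x \<in> gen_subalg \<iota> X \<Longrightarrow> y \<in> gen_subalg \<iota> X \<Longrightarrow> x * y \<in> gen_subalg \<iota> X"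

text \<open>The defining relations (0)-(6) of B_G(Upsilon) for elements T_w, e_i of an algebra.\<close>
definition BG_relations ::
  "'n::finite cmat set \<Rightarrow> ('n cmat \<Rightarrow> complex) \<Rightarrow> ('n cvec set \<Rightarrow> complex) \<Rightarrow>
   (complex \<Rightarrow> 'b::ring_1) \<Rightarrow> ('n cmat \<Rightarrow> 'b) \<Rightarrow> ('n cvec set \<Rightarrow> 'b) \<Rightarrow> bool" where
  "BG_relations G \<mu> \<tau> \<iota> T e \<longleftrightarrow>
     T (mat 1) = 1
   \<and> (\<forall>w1\<in>G. \<forall>w2\<in>G. T w1 * T w2 = T (w1 ** w2))
   \<and> (\<forall>i\<in>hyps G. T (dist_refl G i) * e i = e i \<and> e i * T (dist_refl G i) = e i)
   \<and> (\<forall>i\<in>hyps G. \<forall>w\<in>G. act w i = i \<and> noncrossing_edge G (i \<inter> fixspace w) \<longrightarrow>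
        T w * e i = e i \<and> e i * T w = e i)
   \<and> (\<forall>i\<in>hyps G. e i * e i = \<iota> (\<tau> i) * e i)
   \<and> (\<forall>i\<in>hyps G. \<forall>j\<in>hyps G. \<forall>w\<in>G. act w j = i \<longrightarrow> T w * e j = e i * T w)
   \<and> (\<forall>i\<in>hyps G. \<forall>j\<in>hyps G. i \<noteq> j \<and> transversal G i j \<longrightarrow> e i * e j = e j * e i)
   \<and> (\<forall>i\<in>hyps G. \<forall>j\<in>hyps G. i \<noteq> j \<and> noncrossing_edge G (i \<inter> j) \<and> Rset G i j \<noteq> {} \<longrightarrow>
        e i * e j = (\<Sum>s\<in>Rset G i j. \<iota> (\<mu> s) * T s) * e j
      \<and> e i * e j = e i * (\<Sum>s\<in>Rset G i j. \<iota> (\<mu> s) * T s))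
   \<and> (\<forall>i\<in>hyps G. \<forall>j\<in>hyps G. i \<noteq> j \<and> noncrossing_edge G (i \<inter> j) \<and> Rset G i j = {} \<longrightarrow>
        e i * e j = 0)"

definition BG_spanning_set ::
  "'n::finite cmat set \<Rightarrow> ('n cmat \<Rightarrow> 'b::ring_1) \<Rightarrow> ('n cvec set \<Rightarrow> 'b) \<Rightarrow> 'b set" where
  "BG_spanning_set G T e =
     {T w * prod_list (map e is) | w is. w \<in> G \<and> set is \<subseteq> hyps G \<and> distinct is
        \<and> (\<forall>u\<in>set is. \<forall>v\<in>set is. e u * e v = e v * e u)}"

end

theory Submission
  imports Defs
begin

lemma minv: fixes A :: "'a::semiring_1^'n^'n" assumes "invertible A"
  shows "A ** matrix_inv A = mat 1" "matrix_inv A ** A = mat 1"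
  using someI_ex[OF assms[unfolded invertible_def]] unfolding matrix_inv_def by auto

lemma fix_conj:
  fixes w s :: "'n::finite cmat" assumes "invertible w"
  shows "fixspace (w ** s ** matrix_inv w) = act w (fixspace s)"
proof
  show "fixspace (w ** s ** matrix_inv w) \<subseteq> act w (fixspace s)"
  proof
    fix v assume "v \<in> fixspace (w ** s ** matrix_inv w)"
    hence v: "(w ** s ** matrix_inv w) *v v = v" by (simp add: fixspace_def)
    have "s *v (matrix_inv w *v v) = matrix_inv w *v v"
      using arg_cong[OF v, of "\<lambda>x. matrix_inv w *v x"]
      by (simp add: matrix_vector_mul_assoc matrix_mul_assoc minv[OF assms])
    moreover have "v = w *v (matrix_inv w *v v)"
      by (simp add: matrix_vector_mul_assoc minv[OF assms])
    ultimately show "v \<in> act w (fixspace s)" unfolding act_def fixspace_def by blast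
  qed
next
  show "act w (fixspace s) \<subseteq> fixspace (w ** s ** matrix_inv w)"
  proof
    fix v assume "v \<in> act w (fixspace s)"
    then obtain u where u: "s *v u = u" "v = w *v u" unfolding act_def fixspace_def by auto
    have "(w ** s ** matrix_inv w) *v v = w *v (s *v ((matrix_inv w ** w) *v u))"
      by (simp add: u matrix_vector_mul_assoc matrix_mul_assoc)
    also have "\<dots> = v" by (simp add: minv[OF assms] u)
    finally show "v \<in> fixspace (w ** s ** matrix_inv w)" by (simp add: fixspace_def)
  qed
qed

lemma hyp_image:
  fixes w :: "'n::finite cmat" assumes "invertible w" "is_hyperplane H"
  shows "is_hyperplane (act w H)"
proof -
  have inj: "inj ((*v) w)" by (rule inj_matrix_vector_mult[OF assms(1)])
  have "vec.dim ((*v) w ` H) = vec.dim H"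
    by (rule vec.dim_image_eq[OF matrix_vector_mul_linear_gen]) (use inj in \<open>auto intro: inj_on_subset\<close>)
  moreover have "vec.subspace ((*v) w ` H)"
    using assms(2) unfolding is_hyperplane_def by (intro vec.subspace_image) auto
  ultimately show ?thesis using assms(2) unfolding is_hyperplane_def act_def by auto
qed

lemma hyps_act:
  fixes G :: "'n::finite cmat set"
  assumes fg: "finite_mat_group G" and w: "w \<in> G" and H: "H \<in> hyps G"
  shows "act w H \<in> hyps G"
proof -
  obtain s where s: "s \<in> G" "pseudo_reflection s" "H = fixspace s"
    using H unfolding hyps_def refl_set_def by auto
  have iw: "invertible w" "matrix_inv w \<in> G" using fg w unfolding finite_mat_group_def by auto
  define s' where "s' = w ** s ** matrix_inv w"
  have "s' \<in> G" using fg w s iw unfolding finite_mat_group_def s'_def by auto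
  moreover have "invertible s'" unfolding s'_def
    using s(2) iw unfolding pseudo_reflection_def
    using invertible_mult[of w s] invertible_mult[of "w ** s" "matrix_inv w"]
    by (metis invertible_def minv[OF iw(1)])
  moreover have "s' \<noteq> mat 1"
  proof
    assume "s' = mat 1"
    hence "matrix_inv w ** s' ** w = mat 1" by (simp add: minv[OF iw(1)])
    hence "s = mat 1" unfolding s'_def by (simp add: matrix_mul_assoc minv[OF iw(1)])
      (metis matrix_mul_assoc matrix_mul_lid matrix_mul_rid minv(2)[OF iw(1)])
    thus False using s(2) unfolding pseudo_reflection_def by simp
  qed
  moreover have "fixspace s' = act w H" unfolding s'_def s(3) by (rule fix_conj[OF iw(1)])
  moreover have "is_hyperplane (act w H)"
    using hyp_image[OF iw(1)] s(2,3) unfolding pseudo_reflection_def by auto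
  ultimately show ?thesis unfolding hyps_def refl_set_def pseudo_reflection_def
    by (metis (mono_tags, lifting) image_eqI mem_Collect_eq)
qed

lemma iota0: assumes "complex_algebra_str \<iota>" shows "\<iota> 0 = 0"
proof -
  have "\<iota> (0+0) = \<iota> 0 + \<iota> 0" using assms unfolding complex_algebra_str_def by blast
  thus ?thesis by simp
qed

lemma span_intro: "finite F \<Longrightarrow> F \<subseteq> X \<Longrightarrow> (\<Sum>z\<in>F. \<iota> (c z) * z) \<in> lin_span \<iota> X"
  unfolding lin_span_def by blast

lemma span_zero: "0 \<in> lin_span \<iota> X"
  unfolding lin_span_def by (rule CollectI, rule exI[of _ "\<lambda>_. 0"], rule exI[of _ "{}"]) auto

lemma span_base: assumes "complex_algebra_str \<iota>" "x \<in> X" shows "x \<in> lin_span \<iota> X"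
proof -
  have "x = (\<Sum>y\<in>{x}. \<iota> ((\<lambda>_. 1) y) * y)" using assms(1) unfolding complex_algebra_str_def by simp
  also have "\<dots> \<in> lin_span \<iota> X" by (rule span_intro) (use assms(2) in auto)
  finally show ?thesis .
qed

lemma span_add: assumes "complex_algebra_str \<iota>" "x \<in> lin_span \<iota> X" "y \<in> lin_span \<iota> X"
  shows "x + y \<in> lin_span \<iota> X"
proof -
  obtain c F where x: "x = (\<Sum>z\<in>F. \<iota> (c z) * z)" "finite F" "F \<subseteq> X" using assms(2) unfolding lin_span_def by blast
  obtain d K where y: "y = (\<Sum>z\<in>K. \<iota> (d z) * z)" "finite K" "K \<subseteq> X" using assms(3) unfolding lin_span_def by blast
  have add: "\<And>a b. \<iota> (a + b) = \<iota> a + \<iota> b" using assms(1) unfolding complex_algebra_str_def by blast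
  have z: "\<iota> 0 = 0" by (rule iota0[OF assms(1)])
  define c' where "c' z = (if z \<in> F then c z else 0)" for z
  define d' where "d' z = (if z \<in> K then d z else 0)" for z
  have 1: "x = (\<Sum>z\<in>F \<union> K. \<iota> (c' z) * z)"
    unfolding x(1) by (rule sum.mono_neutral_cong_left) (auto simp: x y c'_def z)
  have 2: "y = (\<Sum>z\<in>F \<union> K. \<iota> (d' z) * z)"
    unfolding y(1) by (rule sum.mono_neutral_cong_left) (auto simp: x y d'_def z)
  have "x + y = (\<Sum>z\<in>F \<union> K. \<iota> (c' z + d' z) * z)"
    unfolding 1 2 add by (simp add: sum.distrib distrib_right)
  also have "\<dots> \<in> lin_span \<iota> X" by (rule span_intro) (use x y in auto)
  finally show ?thesis .
qed

lemma span_scal: assumes "complex_algebra_str \<iota>" "x \<in> lin_span \<iota> X"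
  shows "\<iota> a * x \<in> lin_span \<iota> X"
proof -
  obtain c F where x: "x = (\<Sum>z\<in>F. \<iota> (c z) * z)" "finite F" "F \<subseteq> X" using assms(2) unfolding lin_span_def by blast
  have m: "\<And>a b. \<iota> (a * b) = \<iota> a * \<iota> b" using assms(1) unfolding complex_algebra_str_def by blast
  have "\<iota> a * x = (\<Sum>z\<in>F. \<iota> (a * c z) * z)" unfolding x(1) m
    by (simp add: sum_distrib_left mult.assoc)
  also have "\<dots> \<in> lin_span \<iota> X" by (rule span_intro) (use x in auto)
  finally show ?thesis .
qed

lemma span_sum: assumes "complex_algebra_str \<iota>" "\<And>a. a \<in> A \<Longrightarrow> f a \<in> lin_span \<iota> X"
  shows "sum f A \<in> lin_span \<iota> X"
proof (cases "finite A")
  case True thus ?thesis using assms(2)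
    by (induction A rule: finite_induct) (auto simp: span_zero span_add[OF assms(1)])
qed (simp add: span_zero)

lemma span_left: assumes "complex_algebra_str \<iota>" "\<And>t. t \<in> X \<Longrightarrow> g * t \<in> lin_span \<iota> X"
  and "y \<in> lin_span \<iota> X" shows "g * y \<in> lin_span \<iota> X"
proof -
  obtain c F where y: "y = (\<Sum>z\<in>F. \<iota> (c z) * z)" "finite F" "F \<subseteq> X" using assms(3) unfolding lin_span_def by blast
  have cm: "\<And>a x. \<iota> a * x = x * \<iota> a" using assms(1) unfolding complex_algebra_str_def by blast
  have "g * y = (\<Sum>z\<in>F. \<iota> (c z) * (g * z))" unfolding y(1)
    unfolding sum_distrib_left by (rule sum.cong) (simp_all add: mult.assoc[symmetric] cm[of _ g])
  also have "\<dots> \<in> lin_span \<iota> X" using y assms(2)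
    by (intro span_sum[OF assms(1)] span_scal[OF assms(1)]) auto
  finally show ?thesis .
qed

lemma prod_comm: assumes "\<And>u. u \<in> set xs \<Longrightarrow> a * e u = e u * a"
  shows "a * prod_list (map e xs) = prod_list (map e xs) * a"
  using assms
proof (induction xs)
  case (Cons u xs)
  have "a * prod_list (map e (u # xs)) = (a * e u) * prod_list (map e xs)" by (simp add: mult.assoc)
  also have "\<dots> = e u * (a * prod_list (map e xs))" using Cons.prems by (simp add: mult.assoc)
  also have "\<dots> = prod_list (map e (u # xs)) * a" using Cons by (simp add: mult.assoc)
  finally show ?case .
qed simp

lemma gen_prod: "set xs \<subseteq> X \<Longrightarrow> complex_algebra_str \<iota> \<Longrightarrow> prod_list xs \<in> gen_subalg \<iota> X"
proof (induction xs)
  case Nil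
  have "\<iota> 1 \<in> gen_subalg \<iota> X" by (rule gen_subalg.scal)
  thus ?case using Nil(2) unfolding complex_algebra_str_def by simp
next
  case (Cons a xs) thus ?case by (auto intro: gen_subalg.intros)
qed

lemma gen_sum: "(\<And>a. a \<in> A \<Longrightarrow> f a \<in> gen_subalg \<iota> X) \<Longrightarrow> complex_algebra_str \<iota> \<Longrightarrow> sum f A \<in> gen_subalg \<iota> X"
proof (induction A rule: infinite_finite_induct)
  case (infinite A)
  have "\<iota> 0 \<in> gen_subalg \<iota> X" by (rule gen_subalg.scal)
  thus ?case using infinite by (simp add: iota0)
next
  case empty
  have "\<iota> 0 \<in> gen_subalg \<iota> X" by (rule gen_subalg.scal)
  thus ?case using empty by (simp add: iota0)
next
  case (insert x F) thus ?case by (auto intro: gen_subalg.intros)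
qed

theorem lemma5p2:
  fixes G :: "'n::finite cmat set"
    and \<mu> :: "'n cmat \<Rightarrow> complex" and \<tau> :: "'n cvec set \<Rightarrow> complex"
    and \<iota> :: "complex \<Rightarrow> 'b::ring_1" and T :: "'n cmat \<Rightarrow> 'b" and e :: "'n cvec set \<Rightarrow> 'b"
  assumes "unitary_pseudo_reflection_group G"
    and "admissible G \<mu> \<tau>"
    and "complex_algebra_str \<iota>"
    and "BG_relations G \<mu> \<tau> \<iota> T e"
  shows "gen_subalg \<iota> (T ` G \<union> e ` hyps G) = lin_span \<iota> (BG_spanning_set G T e)"
proof -
  note ca = assms(3)
  have fg: "finite_mat_group G" using assms(1) unfolding unitary_pseudo_reflection_group_def by blast
  have one: "mat 1 \<in> G" and mulG: "\<And>a b. a \<in> G \<Longrightarrow> b \<in> G \<Longrightarrow> a ** b \<in> G"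
    and invG: "\<And>a. a \<in> G \<Longrightarrow> invertible a \<and> matrix_inv a \<in> G"
    using fg unfolding finite_mat_group_def by auto
  have cm: "\<And>a x. \<iota> a * x = x * \<iota> a" using ca unfolding complex_algebra_str_def by blast
  obtain R0 R1 R2 R3 R4 R5 R6 R7 R8 where RR: "BG_relations G \<mu> \<tau> \<iota> T e = (R0 \<and> R1 \<and> R2 \<and> R3 \<and> R4 \<and> R5 \<and> R6 \<and> R7 \<and> R8)"
    and D: "R0 = (T (mat 1) = 1)" "R1 = (\<forall>w1\<in>G. \<forall>w2\<in>G. T w1 * T w2 = T (w1 ** w2))"
      "R4 = (\<forall>i\<in>hyps G. e i * e i = \<iota> (\<tau> i) * e i)"
      "R5 = (\<forall>i\<in>hyps G. \<forall>j\<in>hyps G. \<forall>w\<in>G. act w j = i \<longrightarrow> T w * e j = e i * T w)"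
      "R6 = (\<forall>i\<in>hyps G. \<forall>j\<in>hyps G. i \<noteq> j \<and> transversal G i j \<longrightarrow> e i * e j = e j * e i)"
      "R7 = (\<forall>i\<in>hyps G. \<forall>j\<in>hyps G. i \<noteq> j \<and> noncrossing_edge G (i \<inter> j) \<and> Rset G i j \<noteq> {} \<longrightarrow>
        e i * e j = (\<Sum>s\<in>Rset G i j. \<iota> (\<mu> s) * T s) * e j
      \<and> e i * e j = e i * (\<Sum>s\<in>Rset G i j. \<iota> (\<mu> s) * T s))"
      "R8 = (\<forall>i\<in>hyps G. \<forall>j\<in>hyps G. i \<noteq> j \<and> noncrossing_edge G (i \<inter> j) \<and> Rset G i j = {} \<longrightarrow>
        e i * e j = 0)"
    unfolding BG_relations_def by blast
  have RRR: "R0" "R1" "R4" "R5" "R6" "R7" "R8" using assms(4) RR by simp_all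
  have T1: "T (mat 1) = 1" using RRR(1) D(1) by simp
  have Tm: "\<And>w1 w2. w1 \<in> G \<Longrightarrow> w2 \<in> G \<Longrightarrow> T w1 * T w2 = T (w1 ** w2)" using RRR(2) D(2) by simp
  have sq: "\<And>i. i \<in> hyps G \<Longrightarrow> e i * e i = \<iota> (\<tau> i) * e i" using RRR(3) D(3) by simp
  have r3: "\<And>i j w. i \<in> hyps G \<Longrightarrow> j \<in> hyps G \<Longrightarrow> w \<in> G \<Longrightarrow> act w j = i \<Longrightarrow> T w * e j = e i * T w"
    using RRR(4) unfolding D(4) by blast
  have r4: "\<And>i j. i \<in> hyps G \<Longrightarrow> j \<in> hyps G \<Longrightarrow> i \<noteq> j \<Longrightarrow> transversal G i j \<Longrightarrow> e i * e j = e j * e i"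
    using RRR(5) unfolding D(5) by blast
  have r5: "\<And>i j. i \<in> hyps G \<Longrightarrow> j \<in> hyps G \<Longrightarrow> i \<noteq> j \<Longrightarrow> noncrossing_edge G (i \<inter> j) \<Longrightarrow> Rset G i j \<noteq> {} \<Longrightarrow>
        e i * e j = (\<Sum>s\<in>Rset G i j. \<iota> (\<mu> s) * T s) * e j"
    using RRR(6) unfolding D(6) by blast
  have r6: "\<And>i j. i \<in> hyps G \<Longrightarrow> j \<in> hyps G \<Longrightarrow> i \<noteq> j \<Longrightarrow> noncrossing_edge G (i \<inter> j) \<Longrightarrow> Rset G i j = {} \<Longrightarrow>
        e i * e j = 0"
    using RRR(7) unfolding D(7) by blast
  define S where "S = BG_spanning_set G T e"
  define L where "L = lin_span \<iota> S"
  define valid where "valid ks \<longleftrightarrow> set ks \<subseteq> hyps G \<and> distinct ks \<and> (\<forall>u\<in>set ks. \<forall>v\<in>set ks. e u * e v = e v * e u)" for ks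
  have inS: "T w * prod_list (map e ks) \<in> L" if "w \<in> G" "valid ks" for w ks
    unfolding L_def using that by (intro span_base[OF ca]) (auto simp: S_def BG_spanning_set_def valid_def)
  have core: "T w * (e j * prod_list (map e ks)) \<in> L" if w: "w \<in> G" and j: "j \<in> hyps G" and v: "valid ks" for w j ks
  proof -
  have comm: "\<And>a b. a \<in> set ks \<Longrightarrow> b \<in> set ks \<Longrightarrow> e a * e b = e b * e a"
    using v unfolding valid_def by blast
  show ?thesis
  proof (cases "j \<in> set ks")
    case True
    then obtain xs ys where ks: "ks = xs @ j # ys" by (meson split_list)
    have c: "e j * prod_list (map e xs) = prod_list (map e xs) * e j"
      by (rule prod_comm, rule comm) (simp_all add: ks)
    have "e j * prod_list (map e ks) = prod_list (map e xs) * (e j * e j) * prod_list (map e ys)"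
      unfolding ks by (simp add: mult.assoc[symmetric] c)
    also have "\<dots> = \<iota> (\<tau> j) * prod_list (map e ks)"
      unfolding sq[OF j] ks by (simp add: mult.assoc[symmetric] cm[of _ "prod_list (map e xs)"])
    finally have "T w * (e j * prod_list (map e ks)) = \<iota> (\<tau> j) * (T w * prod_list (map e ks))"
      by (simp add: mult.assoc[symmetric] cm[of _ "T w"])
    thus ?thesis using span_scal[OF ca inS[OF w v, unfolded L_def]] unfolding L_def by simp
  next
    case False
    note nj = False
    show ?thesis
    proof (cases "\<forall>u\<in>set ks. e j * e u = e u * e j")
      case True
      have "\<forall>a\<in>set (j # ks). \<forall>b\<in>set (j # ks). e a * e b = e b * e a"
      proof (intro ballI)
        fix a b assume a: "a \<in> set (j # ks)" and b: "b \<in> set (j # ks)"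
        show "e a * e b = e b * e a"
        proof (cases "a = j")
          case aj: True
          show ?thesis
          proof (cases "b = j")
            case False hence "b \<in> set ks" using b by simp
            thus ?thesis using True aj by simp
          qed (simp add: aj)
        next
          case False hence a': "a \<in> set ks" using a by simp
          show ?thesis
          proof (cases "b = j")
            case bj: True
            thus ?thesis using True a' by metis
          next
            case False hence "b \<in> set ks" using b by simp
            thus ?thesis using comm a' by blast
          qed
        qed
      qed
      moreover have "set (j # ks) \<subseteq> hyps G" "distinct (j # ks)" using v nj j unfolding valid_def by simp_all
      ultimately have "valid (j # ks)" unfolding valid_def by blast
      from inS[OF w this] show ?thesis by simp
    next
      case False2: False
      then obtain u where u: "u \<in> set ks" "e j * e u \<noteq> e u * e j" by blast
      then obtain xs ys where ks: "ks = xs @ u # ys" by (meson split_list)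
      have uh: "u \<in> hyps G" using u v unfolding valid_def by auto
      have c: "e u * prod_list (map e xs) = prod_list (map e xs) * e u"
        by (rule prod_comm, rule comm) (simp_all add: ks)
      have P: "prod_list (map e ks) = e u * prod_list (map e (xs @ ys))"
        unfolding ks by (simp add: mult.assoc[symmetric] c)
      have sk: "set (u # xs @ ys) = set ks" unfolding ks by auto
      have dk: "distinct (u # xs @ ys)" using v unfolding valid_def ks by auto
      have v': "valid (u # xs @ ys)" using v dk unfolding valid_def sk by blast
      have ju: "j \<noteq> u" using u by auto
      have nt: "\<not> transversal G j u" using r4[OF j uh ju] u by auto
      have nc: "noncrossing_edge G (j \<inter> u)"
        unfolding noncrossing_edge_def codim2_edge_def crossing_edge_def
      proof (intro conjI)
        show "\<exists>H\<in>hyps G. \<exists>K\<in>hyps G. H \<noteq> K \<and> j \<inter> u = H \<inter> K" using j uh ju by blast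
        show "\<not> (\<exists>H\<in>hyps G. \<exists>K\<in>hyps G. transversal G H K \<and> j \<inter> u = H \<inter> K)"
        proof
          assume "\<exists>H\<in>hyps G. \<exists>K\<in>hyps G. transversal G H K \<and> j \<inter> u = H \<inter> K"
          then obtain H K where HK: "H \<in> hyps G" "K \<in> hyps G" "transversal G H K" "j \<inter> u = H \<inter> K" by blast
          have eq: "{L \<in> hyps G. H \<inter> K \<subseteq> L} = {H, K}" "H \<noteq> K" using HK(3) unfolding transversal_def by auto
          have "j \<in> {H, K}" "u \<in> {H, K}" using eq(1) HK(4) j uh by blast+
          hence "{j, u} = {H, K}" using ju by auto
          hence "transversal G j u" using eq HK(4) ju unfolding transversal_def by auto
          thus False using nt by simp
        qed
      qed
      show ?thesis
      proof (cases "Rset G j u = {}")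
        case True
        have "T w * (e j * prod_list (map e ks)) = 0"
          unfolding P by (simp add: mult.assoc[symmetric] r6[OF j uh ju nc True])
        thus ?thesis unfolding L_def by (simp add: span_zero)
      next
        case False
        have RG: "Rset G j u \<subseteq> G" unfolding Rset_def refl_set_def by auto
        have "T w * (e j * prod_list (map e ks)) = T w * ((e j * e u) * prod_list (map e (xs @ ys)))"
          unfolding P by (simp add: mult.assoc)
        also have "\<dots> = (\<Sum>s\<in>Rset G j u. T w * (\<iota> (\<mu> s) * (T s * (e u * prod_list (map e (xs @ ys))))))"
          unfolding r5[OF j uh ju nc False] by (simp add: sum_distrib_left sum_distrib_right mult.assoc)
        also have "\<dots> = (\<Sum>s\<in>Rset G j u. \<iota> (\<mu> s) * (T (w ** s) * prod_list (map e (u # xs @ ys))))"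
        proof (rule sum.cong[OF refl])
          fix s assume "s \<in> Rset G j u"
          hence s: "s \<in> G" using RG by auto
          have "T w * (\<iota> (\<mu> s) * (T s * (e u * prod_list (map e (xs @ ys))))) =
            \<iota> (\<mu> s) * ((T w * T s) * (e u * prod_list (map e (xs @ ys))))"
            by (simp only: mult.assoc[symmetric] cm[of _ "T w"])
          thus "T w * (\<iota> (\<mu> s) * (T s * (e u * prod_list (map e (xs @ ys))))) =
            \<iota> (\<mu> s) * (T (w ** s) * prod_list (map e (u # xs @ ys)))"
            by (simp add: Tm[OF w s])
        qed
        also have "\<dots> \<in> L" unfolding L_def
          by (intro span_sum[OF ca] span_scal[OF ca] inS[unfolded L_def] mulG[OF w] v') (use RG in auto)
        finally show ?thesis .
      qed
    qed
  qed
  qed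
  have genS: "g * t \<in> L" if g: "g \<in> T ` G \<union> e ` hyps G" and t: "t \<in> S" for g t
  proof -
    obtain w ks where t: "t = T w * prod_list (map e ks)" "w \<in> G" "valid ks"
      using t unfolding S_def BG_spanning_set_def valid_def by blast
    show ?thesis using g
    proof
      assume "g \<in> T ` G"
      then obtain v where v: "v \<in> G" "g = T v" by auto
      have "g * t = T (v ** w) * prod_list (map e ks)" unfolding t v(2) by (simp add: mult.assoc[symmetric] Tm[OF v(1) t(2)])
      thus ?thesis using inS[OF mulG[OF v(1) t(2)] t(3)] by simp
    next
      assume "g \<in> e ` hyps G"
      then obtain i where i: "i \<in> hyps G" "g = e i" by auto
      have iw: "invertible w" "matrix_inv w \<in> G" using invG[OF t(2)] by auto
      define j where "j = act (matrix_inv w) i"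
      have jh: "j \<in> hyps G" unfolding j_def by (rule hyps_act[OF fg iw(2) i(1)])
      have "act w j = i" unfolding j_def act_def image_image
        by (simp add: matrix_vector_mul_assoc minv[OF iw(1)])
      hence "T w * e j = e i * T w" using r3[OF i(1) jh t(2)] by simp
      hence "g * t = T w * (e j * prod_list (map e ks))" unfolding t i(2) by (simp add: mult.assoc[symmetric])
      thus ?thesis using core[OF t(2) jh t(3)] by simp
    qed
  qed
  have mulL: "x * y \<in> L" if "x \<in> gen_subalg \<iota> (T ` G \<union> e ` hyps G)" "y \<in> L" for x y
    using that
  proof (induction x arbitrary: y rule: gen_subalg.induct)
    case (scal c) thus ?case unfolding L_def by (rule span_scal[OF ca])
  next
    case (gen x)
    have "\<And>t. t \<in> S \<Longrightarrow> x * t \<in> lin_span \<iota> S" using genS gen.hyps unfolding L_def by blast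
    thus ?case using span_left[OF ca, of S x y] gen.prems unfolding L_def by blast
  next
    case (add x1 x2)
    have a: "x1 * y \<in> L" "x2 * y \<in> L" using add.IH add.prems by blast+
    have "x1 * y + x2 * y \<in> L" using span_add[OF ca a[unfolded L_def]] unfolding L_def .
    thus ?case by (simp only: distrib_right)
  next
    case (mult x1 x2)
    have "x2 * y \<in> L" using mult.IH(2) mult.prems by blast
    hence "x1 * (x2 * y) \<in> L" using mult.IH(1) by blast
    thus ?case by (simp only: mult.assoc)
  qed
  have oneL: "1 \<in> L" using inS[OF one, of "[]"] by (simp add: T1 valid_def)
  show ?thesis
  proof
    show "gen_subalg \<iota> (T ` G \<union> e ` hyps G) \<subseteq> lin_span \<iota> (BG_spanning_set G T e)"
      using mulL oneL unfolding L_def S_def by (metis mult.right_neutral subsetI)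
  next
    show "lin_span \<iota> (BG_spanning_set G T e) \<subseteq> gen_subalg \<iota> (T ` G \<union> e ` hyps G)"
    proof
      fix x assume "x \<in> lin_span \<iota> (BG_spanning_set G T e)"
      then obtain c F where x: "x = (\<Sum>z\<in>F. \<iota> (c z) * z)" "F \<subseteq> BG_spanning_set G T e"
        unfolding lin_span_def by blast
      have "z \<in> gen_subalg \<iota> (T ` G \<union> e ` hyps G)" if zS: "z \<in> BG_spanning_set G T e" for z
      proof -
        obtain w ks where z: "z = T w * prod_list (map e ks)" "w \<in> G" "set ks \<subseteq> hyps G"
          using zS unfolding BG_spanning_set_def by blast
        show ?thesis unfolding z(1)
          by (intro gen_subalg.mult gen_subalg.gen gen_prod ca) (use z in auto)
      qed
      thus "x \<in> gen_subalg \<iota> (T ` G \<union> e ` hyps G)" unfolding x(1) using x(2)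
        by (intro gen_sum ca gen_subalg.mult gen_subalg.scal) auto
    qed
  qed
qed

end
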